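(* Let $H_n=\sum_{j=1}^n\frac1j$, let $\gamma$ be the Euler–Mascheroni constant, $\Gamma$ the gamma function, $z^{\overline{k}} = z(z+1) \cdots (z + k -1)$ the rising factorial, and $G$ the Barnes $G$-function. Then: (i) for $k \in \{1, 2,\ldots\}$, $$\sum_{n = 1}^\infty \left(H_n - \log\sqrt[k]{n^{\overline{k}}} - \gamma + \frac{k - 2}{2n} \right) = \frac{\gamma k + 1 -\log (2 \pi )}{2} + \frac{\log G(k+1)}{k};$$ (ii) for $x >0$, $$\sum_{n=1}^\infty \left(H_n - \log(n + x -1) - \gamma + \frac{x}{n} - \frac{3}{2n}\right) = \gamma x + \log\Gamma(x) + \frac{1 - \gamma -\log (2\pi)}{2}.$$
   Context: The Barnes $G$-function is the entire function $G(z+1) = (2\pi)^{z/2} e^{-\frac{z+z^2(1+\gamma)}{2}} \prod_{m=1}^\infty \left(1+\frac{z}{m}\right)^m e^{-z+\frac{z^2}{2m}}$; it satisfies $G(1)=1$ and $G(z+1)=\Gamma(z)G(z)$. *)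

theory Defs
  imports "HOL-Analysis.Analysis"
begin

definition barnes_G :: "complex \<Rightarrow> complex" where
  "barnes_G z = (let w = z - 1 in
     (complex_of_real (2 * pi)) powr (w / 2)
     * exp (- (w + w\<^sup>2 * (1 + complex_of_real euler_mascheroni)) / 2)
     * (\<Prod>m. (1 + w / of_nat (Suc m)) ^ (Suc m)
              * exp (- w + w\<^sup>2 / (2 * of_nat (Suc m)))))"

end

theory Submission
  imports Defs "HOL-Real_Asymp.Real_Asymp"
begin

lemma aux_alg1: "x>0 \<Longrightarrow> (x + 1/2) * ((inverse x + inverse (x + 1)) / 2) - 1 = 1 / (4 * x) - 1 / (4 * (x + 1::real))"
  by (simp add: inverse_eq_divide divide_simps) (simp add: algebra_simps)

definition stir :: "nat \<Rightarrow> real" where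
  "stir n = ln (fact n) - (real n + 1/2) * ln (real n) + real n"

lemma ln_fact_Suc: "ln (fact (Suc n) :: real) = ln (real n + 1) + ln (fact n)"
proof -
  have "(fact (Suc n) :: real) = (real n + 1) * fact n" by (simp add: algebra_simps)
  moreover have "(fact n :: real) > 0" by simp
  ultimately show ?thesis by (simp add: ln_mult)
qed

lemma stir_step:
  shows "stir n - stir (Suc n) = (real n + 1/2) * (ln (real n + 1) - ln (real n)) - 1"
  unfolding stir_def using ln_fact_Suc[of n] by (simp add: algebra_simps)

lemma stir_step_ge: assumes "n \<ge> 1" shows "stir n - stir (Suc n) \<ge> 0"
proof -
  have "ln (real n + 1) - ln (real n) \<ge> 2 * (real n + 1 - real n) / (real n + (real n + 1))"
    using assms by (intro ln_inverse_approx_ge) auto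
  hence "(real n + 1/2) * (ln (real n + 1) - ln (real n)) \<ge> (real n + 1/2) * (2 / (2 * real n + 1))"
    using assms by (intro mult_left_mono) auto
  moreover have "(real n + 1/2) * (2 / (2 * real n + 1)) = 1" using assms by (simp add: field_simps)
  ultimately show ?thesis using stir_step[of n] by linarith
qed

lemma stir_step_le: assumes "n \<ge> 1"
  shows "stir n - stir (Suc n) \<le> 1 / (4 * real n) - 1 / (4 * (real n + 1))"
proof -
  have npos: "real n > 0" using assms by simp
  have "ln (real n + 1) - ln (real n) \<le> 1 * (inverse (real n) + inverse (real n + 1)) / 2"
    using assms ln_inverse_approx_le[of "real n" 1] by auto
  hence "(real n + 1/2) * (ln (real n + 1) - ln (real n)) \<le> (real n + 1/2) * ((inverse (real n) + inverse (real n + 1)) / 2)"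
    using assms by (intro mult_left_mono) auto
  moreover have "(real n + 1/2) * ((inverse (real n) + inverse (real n + 1)) / 2) - 1 = 1 / (4 * real n) - 1 / (4 * (real n + 1))"
    using aux_alg1[OF npos] .
  ultimately show ?thesis using stir_step[of n] by linarith
qed

lemma stir_lower: "stir (Suc n) \<ge> 3/4 + 1 / (4 * (real n + 1))"
proof (induction n)
  case 0 then show ?case by (simp add: stir_def)
next
  case (Suc n)
  have "stir (Suc n) - stir (Suc (Suc n)) \<le> 1 / (4 * real (Suc n)) - 1 / (4 * (real (Suc n) + 1))"
    by (rule stir_step_le) simp
  with Suc show ?case by (simp add: algebra_simps)
qed

lemma stir_convergent: obtains L where "stir \<longlonglongrightarrow> L"
proof -
  have "decseq (\<lambda>n. stir (Suc n))"
    by (rule decseq_SucI) (use stir_step_ge in force)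
  moreover have "\<forall>i. 0 \<le> stir (Suc i)"
  proof
    fix i
    have "0 \<le> 1 / (4 * (real i + 1))" by simp
    thus "0 \<le> stir (Suc i)" using stir_lower[of i] by linarith
  qed
  ultimately obtain L where "(\<lambda>n. stir (Suc n)) \<longlonglongrightarrow> L" by (rule decseq_convergent)
  hence "stir \<longlonglongrightarrow> L" by (rule LIMSEQ_imp_Suc)
  then show ?thesis by (rule that)
qed

lemma ln_GS_half:
  assumes n: "n \<ge> 1"
  shows "ln (Gamma_series (1/2::real) n) = 2 * stir n - stir (2*n) + (ln (real n) - ln (real n + 1/2)) - ln 2 / 2"
proof -
  have npos: "real n > 0" using n by simp
  have pp: "pochhammer (1/2::real) n > 0" by (intro pochhammer_pos) simp
  have fd: "(fact (2*n) :: real) = 2 ^ (2*n) * pochhammer (1/2) n * fact n" by (rule fact_double)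
  have lnfd: "ln (fact (2*n) :: real) = real (2*n) * ln 2 + ln (pochhammer (1/2) n) + ln (fact n)"
    using pp by (simp add: fd ln_mult ln_realpow)
  have ps: "pochhammer (1/2::real) (n+1) = pochhammer (1/2) n * (1/2 + real n)"
    by (simp add: pochhammer_Suc)
  have "ln (Gamma_series (1/2::real) n) = ln (fact n) + (1/2) * ln (real n) - ln (pochhammer (1/2) (n+1))"
    unfolding Gamma_series_def using pp npos pochhammer_pos[of "1/2::real" "Suc n"]
    by (simp add: ln_div ln_mult)
  also have "ln (pochhammer (1/2::real) (n+1)) = ln (pochhammer (1/2) n) + ln (real n + 1/2)"
    unfolding ps using pp npos by (simp add: ln_mult add.commute)
  also have "ln (real (2*n)) = ln 2 + ln (real n)" using npos by (simp add: ln_mult)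
  hence "stir (2*n) = ln (fact (2*n)) - (real (2*n) + 1/2) * (ln 2 + ln (real n)) + real (2*n)"
    unfolding stir_def by simp
  ultimately show ?thesis using lnfd unfolding stir_def by (simp add: algebra_simps)
qed

lemma stir_limit: "stir \<longlonglongrightarrow> ln (2*pi) / 2"
proof -
  obtain L where L: "stir \<longlonglongrightarrow> L" by (rule stir_convergent)
  have "(stir \<circ> (\<lambda>n. 2*n)) \<longlonglongrightarrow> L"
    by (rule LIMSEQ_subseq_LIMSEQ[OF L]) (simp add: strict_mono_def)
  hence L2: "(\<lambda>n. stir (2*n)) \<longlonglongrightarrow> L" by (simp add: o_def)
  have lnl: "(\<lambda>n. ln (real n) - ln (real n + 1/2)) \<longlonglongrightarrow> 0" by real_asymp
  have A: "(\<lambda>n. 2 * stir n - stir (2*n) + (ln (real n) - ln (real n + 1/2)) - ln 2 / 2)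
             \<longlonglongrightarrow> 2 * L - L + 0 - ln 2 / 2"
    by (intro tendsto_intros L L2 lnl)
  have "(\<lambda>n. ln (Gamma_series (1/2::real) n)) \<longlonglongrightarrow> ln (Gamma (1/2))"
    by (intro tendsto_intros) (simp add: Gamma_one_half_real)
  hence B: "(\<lambda>n. 2 * stir n - stir (2*n) + (ln (real n) - ln (real n + 1/2)) - ln 2 / 2) \<longlonglongrightarrow> ln (Gamma (1/2))"
    by (rule Lim_transform_eventually)
       (use ln_GS_half in \<open>auto simp: eventually_at_top_linorder intro!: exI[of _ 1]\<close>)
  have "2 * L - L + 0 - ln 2 / 2 = ln (Gamma (1/2))" using LIMSEQ_unique[OF A B] .
  also have "ln (Gamma (1/2::real)) = ln pi / 2" by (simp add: Gamma_one_half_real ln_sqrt)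
  finally have "L = ln (2*pi)/2" by (simp add: ln_mult algebra_simps)
  with L show ?thesis by simp
qed

lemma harm_asymp: "(\<lambda>N. real N * (harm N - ln (real N) - euler_mascheroni)) \<longlonglongrightarrow> 1/2"
proof (rule tendsto_sandwich)
  show "eventually (\<lambda>N. real N * (ln (real N + 1) - ln (real N)) - 1/2
          \<le> real N * (harm N - ln (real N) - euler_mascheroni)) sequentially"
  proof (rule eventually_mono[OF eventually_ge_at_top[of 1]])
    fix N :: nat assume N: "N \<ge> 1"
    then obtain n where n: "N = Suc n" by (cases N) auto
    have "euler_mascheroni \<le> harm (Suc n) - ln (real_of_nat (n + 2)) + 1/real_of_nat (2 * (n + 1))"
      by (rule euler_mascheroni_upper)
    hence "euler_mascheroni \<le> harm N - ln (real N + 1) + 1 / (2 * real N)" by (simp add: n add_ac)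
    hence "real N * euler_mascheroni \<le> real N * (harm N - ln (real N + 1) + 1 / (2 * real N))"
      by (intro mult_left_mono) auto
    thus "real N * (ln (real N + 1) - ln (real N)) - 1/2 \<le> real N * (harm N - ln (real N) - euler_mascheroni)"
      using N by (simp add: algebra_simps)
  qed
  show "eventually (\<lambda>N. real N * (harm N - ln (real N) - euler_mascheroni)
          \<le> real N * (ln (real N + 1) - ln (real N)) - real N / (2 * (real N + 1))) sequentially"
  proof (rule eventually_mono[OF eventually_ge_at_top[of 1]])
    fix N :: nat assume N: "N \<ge> 1"
    then obtain n where n: "N = Suc n" by (cases N) auto
    have "euler_mascheroni \<ge> harm (Suc n) - ln (real_of_nat (n + 2)) + 1/real_of_nat (2 * (n + 2))"
      by (rule euler_mascheroni_lower)
    hence "euler_mascheroni \<ge> harm N - ln (real N + 1) + 1 / (2 * (real N + 1))" by (simp add: n add_ac)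
    hence "real N * euler_mascheroni \<ge> real N * (harm N - ln (real N + 1) + 1 / (2 * (real N + 1)))"
      by (intro mult_left_mono) auto
    thus "real N * (harm N - ln (real N) - euler_mascheroni) \<le> real N * (ln (real N + 1) - ln (real N)) - real N / (2 * (real N + 1))"
      using N by (simp add: algebra_simps)
  qed
  show "(\<lambda>N. real N * (ln (real N + 1) - ln (real N)) - 1/2) \<longlonglongrightarrow> 1/2" by real_asymp
  show "(\<lambda>N. real N * (ln (real N + 1) - ln (real N)) - real N / (2 * (real N + 1))) \<longlonglongrightarrow> 1/2" by real_asymp
qed

lemma partial_sum_II:
  assumes x: "x > 0"
  shows "(\<Sum>m<N. let n = Suc m in harm n - ln (real n + x - 1) - euler_mascheroni + x / real n - 3 / (2 * real n))
     = (real N + x - 1/2) * harm N - real N * (1 + euler_mascheroni) - ln (pochhammer x N)"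
proof (induction N)
  case 0 then show ?case by (simp add: harm_def)
next
  case (Suc N)
  have pp: "pochhammer x N > 0" using x by (intro pochhammer_pos)
  have xn: "x + real N > 0" using x by simp
  have lp: "ln (pochhammer x (Suc N)) = ln (pochhammer x N) + ln (x + real N)"
    using pp xn by (simp add: pochhammer_Suc ln_mult)
  have hs: "harm (Suc N) = harm N + 1 / (real N + 1)" by (simp add: harm_Suc inverse_eq_divide)
  have e: "ln (real (Suc N) + x - 1) = ln (x + real N)" by (simp add: add_ac)
  have t: "(let n = Suc N in harm n - ln (real n + x - 1) - euler_mascheroni + x / real n - 3 / (2 * real n))
     = harm N + 1 / (real N + 1) - ln (x + real N) - euler_mascheroni + x / (real N + 1) - 3 / (2 * (real N + 1))"
    by (simp add: Let_def hs e add_ac)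
  have alg0: "(n + x - 1/2) * H - n * (1 + g) - P + (H + 1 / (n + 1) - L - g + x / (n + 1) - 3 / (2 * (n + 1)))
      = ((n+1) + x - 1/2) * (H + 1 / (n + 1)) - (n+1) * (1 + g) - (P + L)" if "n \<ge> 0" for n H g P L :: real
    using that by (simp add: divide_simps) (simp add: algebra_simps)
  have alg: "(real N + x - 1/2) * H - real N * (1 + g) - P + (H + 1 / (real N + 1) - L - g + x / (real N + 1) - 3 / (2 * (real N + 1)))
      = (real (Suc N) + x - 1/2) * (H + 1 / (real N + 1)) - real (Suc N) * (1 + g) - (P + L)" for H g P L
    using alg0[of "real N" H g P L] by simp
  show ?case
    unfolding sum.lessThan_Suc Suc.IH t lp hs alg ..
qed

lemma partII:
  assumes x: "x > (0::real)"
  shows "(\<lambda>m. let n = Suc m in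
              harm n - ln (real n + x - 1) - euler_mascheroni + x / real n - 3 / (2 * real n))
           sums (euler_mascheroni * x + ln (Gamma x) + (1 - euler_mascheroni - ln (2 * pi)) / 2)"
proof -
  define F where "F N = x * (harm N - ln (real N)) + real N * (harm N - ln (real N) - euler_mascheroni)
      - (1/2) * (harm N - ln (real N)) - stir N + (ln (x + real N) - ln (real N)) + ln (Gamma_series x N)" for N
  have eqF: "(\<Sum>m<N. let n = Suc m in harm n - ln (real n + x - 1) - euler_mascheroni + x / real n - 3 / (2 * real n)) = F N"
    if N: "N \<ge> 1" for N
  proof -
    have npos: "real N > 0" using N by simp
    have pp: "pochhammer x N > 0" using x by (intro pochhammer_pos)
    have xn: "x + real N > 0" using x by simp
    have fp: "(fact N :: real) > 0" by simp
    have lp: "ln (pochhammer x (N+1)) = ln (pochhammer x N) + ln (x + real N)"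
      using pp xn by (simp add: pochhammer_Suc ln_mult)
    have "ln (Gamma_series x N) = ln (fact N) + x * ln (real N) - ln (pochhammer x (N+1))"
      unfolding Gamma_series_def using pp npos fp pochhammer_pos[of x "N+1"] x
      by (simp add: ln_div ln_mult)
    hence g: "ln (Gamma_series x N) = ln (fact N) + x * ln (real N) - ln (pochhammer x N) - ln (x + real N)"
      using lp by simp
    show ?thesis unfolding partial_sum_II[OF x] F_def g stir_def by (simp add: algebra_simps)
  qed
  have lim: "F \<longlonglongrightarrow> x * euler_mascheroni + 1/2 - (1/2) * euler_mascheroni - ln (2*pi)/2 + 0 + ln (Gamma x)"
    unfolding F_def
  proof (intro tendsto_intros euler_mascheroni_LIMSEQ harm_asymp stir_limit)
    show "(\<lambda>N. ln (x + real N) - ln (real N)) \<longlonglongrightarrow> 0" by real_asymp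
    show "Gamma x \<noteq> 0" using x by (simp add: Gamma_real_pos less_imp_neq[symmetric])
  qed
  have eq: "x * euler_mascheroni + 1/2 - (1/2) * euler_mascheroni - ln (2*pi)/2 + 0 + ln (Gamma x)
    = euler_mascheroni * x + ln (Gamma x) + (1 - euler_mascheroni - ln (2 * pi)) / 2"
    by (simp add: field_simps)
  have lim': "F \<longlonglongrightarrow> euler_mascheroni * x + ln (Gamma x) + (1 - euler_mascheroni - ln (2 * pi)) / 2"
    using lim unfolding eq .
  show ?thesis unfolding sums_def
    apply (rule Lim_transform_eventually[OF lim'])
    using eqF
    by (auto simp: eventually_at_top_linorder intro!: exI[of _ 1])
qed

definition gk :: "nat \<Rightarrow> nat \<Rightarrow> real" where
  "gk k m = real (Suc m) * ln (1 + real k / real (Suc m)) - real k + (real k)^2 / (2 * real (Suc m))"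

definition Qk :: "nat \<Rightarrow> nat \<Rightarrow> real" where
  "Qk k M = (\<Sum>m<M. gk k m)"

definition Dk :: "nat \<Rightarrow> nat \<Rightarrow> real" where
  "Dk k M = real M * (ln (real M + real k + 1) - ln (real M + real k)) - stir (M + k)
     + (real k + 1/2) * (harm M - ln (real M + real k)) + real k + ln (fact k)"

definition LQ :: "nat \<Rightarrow> real" where
  "LQ k = (\<Sum>j<k. ln (fact j)) - (real k / 2) * ln (2*pi) + (real k + (real k)^2 * (1 + euler_mascheroni)) / 2"

lemma gk_diff: "gk (Suc k) m - gk k m
   = real (Suc m) * (ln (real m + real k + 2) - ln (real m + real k + 1)) - 1 + (real k + 1/2) / real (Suc m)"
proof -
  have a: "ln (1 + real j / real (Suc m)) = ln (real m + real j + 1) - ln (real m + 1)" for j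
  proof -
    have "1 + real j / real (Suc m) = (real m + real j + 1) / (real m + 1)" by (simp add: field_simps)
    thus ?thesis by (simp add: ln_div add_pos_nonneg)
  qed
  have b: "(real (Suc k))^2 - (real k)^2 = 2 * real k + 1" unfolding of_nat_Suc power2_eq_square by (simp add: algebra_simps)
  have c: "(real (Suc k))^2 / (2 * real (Suc m)) - (real k)^2 / (2 * real (Suc m)) = (real k + 1/2) / real (Suc m)"
    unfolding diff_divide_distrib[symmetric] b by (simp add: field_simps)
  show ?thesis unfolding gk_def a using c by (simp add: algebra_simps)
qed

lemma Qk_Suc: "Qk (Suc k) M = Qk k M + Dk k M"
proof (induction M)
  case 0
  then show ?case by (simp add: Qk_def Dk_def stir_def harm_def)
next
  case (Suc M)
  have st: "stir (M + k) - stir (Suc (M + k)) = (real (M+k) + 1/2) * (ln (real (M+k) + 1) - ln (real (M+k))) - 1"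
    by (rule stir_step)
  have hs: "harm (Suc M) = harm M + 1 / (real M + 1)" by (simp add: harm_Suc inverse_eq_divide)
  have "Dk k (Suc M) - Dk k M = gk (Suc k) M - gk k M"
    unfolding gk_diff Dk_def using st hs
    by (simp add: algebra_simps add_divide_distrib)
  then show ?case using Suc.IH by (simp add: Qk_def)
qed

lemma Dk_lim: "Dk k \<longlonglongrightarrow> 1 - ln (2*pi)/2 + (real k + 1/2) * (euler_mascheroni - 0) + real k + ln (fact k)"
proof -
  have a: "(\<lambda>M. real M * (ln (real M + real k + 1) - ln (real M + real k))) \<longlonglongrightarrow> 1" by real_asymp
  have b: "(\<lambda>M. stir (M + k)) \<longlonglongrightarrow> ln (2*pi)/2" by (rule LIMSEQ_ignore_initial_segment[OF stir_limit])
  have "(\<lambda>M. (harm M - ln (real M)) - (ln (real M + real k) - ln (real M))) \<longlonglongrightarrow> euler_mascheroni - 0"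
    by (intro tendsto_intros euler_mascheroni_LIMSEQ) real_asymp
  hence c: "(\<lambda>M. harm M - ln (real M + real k)) \<longlonglongrightarrow> euler_mascheroni - 0" by simp
  show ?thesis unfolding Dk_def
    by (rule tendsto_add[OF tendsto_add[OF tendsto_add[OF tendsto_diff[OF a b] tendsto_mult[OF tendsto_const c]] tendsto_const] tendsto_const])
qed

lemma Qk_lim: "Qk k \<longlonglongrightarrow> LQ k"
proof (induction k)
  case 0
  then show ?case by (simp add: Qk_def gk_def LQ_def)
next
  case (Suc k)
  have "(\<lambda>M. Qk k M + Dk k M) \<longlonglongrightarrow> LQ k + (1 - ln (2*pi)/2 + (real k + 1/2) * (euler_mascheroni - 0) + real k + ln (fact k))"
    by (intro tendsto_intros Suc.IH Dk_lim)
  moreover have "LQ k + (1 - ln (2*pi)/2 + (real k + 1/2) * (euler_mascheroni - 0) + real k + ln (fact k)) = LQ (Suc k)"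
    unfolding LQ_def by (simp add: power2_eq_square algebra_simps add_divide_distrib)
  ultimately show ?case by (simp add: Qk_Suc[abs_def])
qed

lemma barnes_G_nat: "ln (Re (barnes_G (of_nat k + 1))) = (\<Sum>j<k. ln (fact j))"
proof -
  define f :: "nat \<Rightarrow> complex" where "f m = (1 + of_nat k / of_nat (Suc m)) ^ (Suc m)
      * exp (- of_nat k + (of_nat k)\<^sup>2 / (2 * of_nat (Suc m)))" for m
  have fe: "f m = of_real (exp (gk k m))" for m
  proof -
    define b where "b = 1 + real k / real (Suc m)"
    have bpos: "b > 0" unfolding b_def by (simp add: add_pos_nonneg)
    have "exp (gk k m) = exp (real (Suc m) * ln b) * exp (- real k + (real k)\<^sup>2 / (2 * real (Suc m)))"
      unfolding gk_def b_def by (simp add: exp_add[symmetric] algebra_simps)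
    also have "exp (real (Suc m) * ln b) = b ^ Suc m"
      using bpos by (simp only: exp_of_nat_mult exp_ln)
    finally have "exp (gk k m) = b ^ Suc m * exp (- real k + (real k)\<^sup>2 / (2 * real (Suc m)))" .
    hence "(of_real (exp (gk k m)) :: complex) = of_real (b ^ Suc m) * of_real (exp (- real k + (real k)\<^sup>2 / (2 * real (Suc m))))"
      by (simp only: of_real_mult)
    also have "\<dots> = (of_real b) ^ Suc m * exp (of_real (- real k + (real k)\<^sup>2 / (2 * real (Suc m))))"
      by (simp only: of_real_power exp_of_real)
    also have "(of_real (- real k + (real k)\<^sup>2 / (2 * real (Suc m))) :: complex) = - of_nat k + (of_nat k)\<^sup>2 / (2 * of_nat (Suc m))"
      by simp
    also have "(of_real b :: complex) = 1 + of_nat k / of_nat (Suc m)" unfolding b_def by simp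
    finally show ?thesis unfolding f_def by simp
  qed
  have prod: "(\<Prod>i\<le>n. f (i + 0)) = of_real (exp (Qk k (Suc n)))" for n
    unfolding fe Qk_def by (simp add: exp_sum lessThan_Suc_atMost)
  have "f has_prod of_real (exp (LQ k))"
    unfolding has_prod_def raw_has_prod_def prod
    by (intro disjI1 conjI tendsto_of_real tendsto_exp LIMSEQ_Suc Qk_lim) simp
  hence pinf: "prodinf f = of_real (exp (LQ k))" by (simp add: has_prod_unique[symmetric])
  have "barnes_G (of_nat k + 1) = of_real (2*pi) powr (of_nat k / 2)
      * exp (- (of_nat k + (of_nat k)\<^sup>2 * (1 + of_real euler_mascheroni)) / 2) * prodinf f"
    unfolding barnes_G_def f_def Let_def by simp
  also have "of_real (2*pi) powr (of_nat k / 2) = (of_real ((2*pi) powr (real k / 2)) :: complex)"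
    using powr_of_real[of "2*pi" "real k / 2"] by simp
  also have "exp (- (of_nat k + (of_nat k)\<^sup>2 * (1 + of_real euler_mascheroni)) / 2)
      = (of_real (exp (- (real k + (real k)\<^sup>2 * (1 + euler_mascheroni)) / 2)) :: complex)"
    by (simp add: exp_of_real[symmetric])
  finally have "barnes_G (of_nat k + 1) = of_real ((2*pi) powr (real k / 2)
      * exp (- (real k + (real k)\<^sup>2 * (1 + euler_mascheroni)) / 2) * exp (LQ k))"
    unfolding pinf by simp
  hence "ln (Re (barnes_G (of_nat k + 1))) = (real k / 2) * ln (2*pi)
      + (- (real k + (real k)\<^sup>2 * (1 + euler_mascheroni)) / 2) + LQ k"
    by (simp add: ln_mult)
  also have "\<dots> = (\<Sum>j<k. ln (fact j))" unfolding LQ_def by (simp add: field_simps)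
  finally show ?thesis .
qed

lemma gauss_sum_real: "(\<Sum>j<k. real (Suc j)) = real k * (real k + 1) / 2"
  by (induction k) (simp_all add: field_simps)

lemma partI:
  assumes k: "k \<ge> 1"
  shows "(\<lambda>m. let n = Suc m in
              harm n - ln (root k (pochhammer (real n) k)) - euler_mascheroni
              + (real k - 2) / (2 * real n))
           sums ((euler_mascheroni * real k + 1 - ln (2 * pi)) / 2
                 + ln (Re (barnes_G (of_nat k + 1))) / real k)"
proof -
  define T where "T x m = (let n = Suc m in
              harm n - ln (real n + x - 1) - euler_mascheroni + x / real n - 3 / (2 * real n))" for x :: real and m
  define V where "V x = euler_mascheroni * x + ln (Gamma x) + (1 - euler_mascheroni - ln (2 * pi)) / 2" for x :: real
  have kpos: "real k > 0" using k by simp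
  have S: "(\<lambda>m. (\<Sum>j<k. T (real (Suc j)) m) / real k) sums ((\<Sum>j<k. V (real (Suc j))) / real k)"
    unfolding T_def V_def by (intro sums_divide sums_sum partII) simp
  have feq: "(let n = Suc m in
              harm n - ln (root k (pochhammer (real n) k)) - euler_mascheroni
              + (real k - 2) / (2 * real n)) = (\<Sum>j<k. T (real (Suc j)) m) / real k" for m
  proof -
    define n where "n = real (Suc m)"
    have npos: "n > 0" unfolding n_def by simp
    have pp: "pochhammer n k = (\<Prod>j<k. n + real j)" by (simp add: pochhammer_prod atLeast0LessThan)
    have lr: "ln (root k (pochhammer n k)) = (\<Sum>j<k. ln (n + real j)) / real k"
      using k npos unfolding pp by (simp add: ln_root ln_prod add_pos_nonneg)
    have "(\<Sum>j<k. T (real (Suc j)) m) = (\<Sum>j<k. (harm (Suc m) - euler_mascheroni - 3 / (2 * n)) - ln (n + real j) + real (Suc j) / n)"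
      unfolding T_def n_def Let_def by (intro sum.cong refl) (simp add: algebra_simps)
    also have "\<dots> = real k * (harm (Suc m) - euler_mascheroni - 3 / (2 * n)) - (\<Sum>j<k. ln (n + real j)) + (\<Sum>j<k. real (Suc j)) / n"
      by (simp add: sum.distrib sum_subtractf sum_divide_distrib[symmetric] del: of_nat_Suc)
    also have "(\<Sum>j<k. real (Suc j)) = real k * (real k + 1) / 2" by (rule gauss_sum_real)
    finally have E: "(\<Sum>j<k. T (real (Suc j)) m) = real k * (harm (Suc m) - euler_mascheroni - 3 / (2 * n)) - (\<Sum>j<k. ln (n + real j)) + real k * (real k + 1) / 2 / n" .
    have "(\<Sum>j<k. T (real (Suc j)) m) / real k
        = harm (Suc m) - (\<Sum>j<k. ln (n + real j)) / real k - euler_mascheroni + (real k - 2) / (2 * n)"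
      unfolding E using kpos npos by (simp add: field_simps)
    thus ?thesis using lr unfolding n_def Let_def by simp
  qed
  have veq: "(\<Sum>j<k. V (real (Suc j))) / real k = (euler_mascheroni * real k + 1 - ln (2 * pi)) / 2
                 + ln (Re (barnes_G (of_nat k + 1))) / real k"
  proof -
    have g: "ln (Gamma (real (Suc j))) = ln (fact j)" for j
      using Gamma_fact[of j, where 'a=real] by (simp add: add.commute)
    have "(\<Sum>j<k. V (real (Suc j))) = euler_mascheroni * (\<Sum>j<k. real (Suc j)) + (\<Sum>j<k. ln (fact j))
            + real k * ((1 - euler_mascheroni - ln (2 * pi)) / 2)"
      unfolding V_def g by (simp add: sum.distrib sum_distrib_left del: of_nat_Suc)
    also have "(\<Sum>j<k. real (Suc j)) = real k * (real k + 1) / 2" by (rule gauss_sum_real)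
    also have "(\<Sum>j<k. ln (fact j)) = ln (Re (barnes_G (of_nat k + 1)))" by (rule barnes_G_nat[symmetric])
    finally show ?thesis using kpos by (simp add: field_simps)
  qed
  show ?thesis using S unfolding feq[abs_def, symmetric] veq .
qed

theorem mainTheorem13:
  shows "(\<forall>k::nat. k \<ge> 1 \<longrightarrow>
           (\<lambda>m. let n = Suc m in
              harm n - ln (root k (pochhammer (real n) k)) - euler_mascheroni
              + (real k - 2) / (2 * real n))
           sums ((euler_mascheroni * real k + 1 - ln (2 * pi)) / 2
                 + ln (Re (barnes_G (of_nat k + 1))) / real k))
       \<and> (\<forall>x::real. x > 0 \<longrightarrow>
           (\<lambda>m. let n = Suc m in
              harm n - ln (real n + x - 1) - euler_mascheroni + x / real n - 3 / (2 * real n))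
           sums (euler_mascheroni * x + ln (Gamma x) + (1 - euler_mascheroni - ln (2 * pi)) / 2))"
  using partI partII by blast

end
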